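(* Let $\mathbb{K}$ be a field of characteristic $0$. For a positive integer $r$, let $\mu(r)$ be the least integer $h$ such that $(1,r,h,h,r,1)$ is the Hilbert function of a standard graded Artinian Gorenstein $\mathbb{K}$-algebra (socle degree $5$), and let $\delta(r)=r-\mu(r)$. Then for every integer $m\geq 3$, \[\delta\!\left(m+\binom{m+3}{4}\right)\geq\frac{m+5}{4}\binom{m}{3}.\]
   Context: Standard graded Artinian Gorenstein algebras $Q/I$ are taken with $I$ containing no linear forms, so the codimension equals $h_1$. *)

theory Defs
  imports Complex_Main "HOL-Library.Poly_Mapping"
begin

text \<open>Polynomials over a field 'k in variables x_0, x_1, ...: finitely supported
  maps from monomials (exponent vectors nat \<Rightarrow>0 nat) to coefficients.\<close>
type_synonym 'k mpoly = "(nat \<Rightarrow>\<^sub>0 nat) \<Rightarrow>\<^sub>0 'k"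

definition mdeg :: "(nat \<Rightarrow>\<^sub>0 nat) \<Rightarrow> nat" where
  "mdeg m = (\<Sum>i\<in>Poly_Mapping.keys m. Poly_Mapping.lookup m i)"

definition polyring :: "nat \<Rightarrow> 'k::field mpoly set" where
  "polyring n = {p. \<forall>m\<in>Poly_Mapping.keys p. Poly_Mapping.keys m \<subseteq> {..<n}}"

definition homog :: "nat \<Rightarrow> nat \<Rightarrow> 'k::field mpoly set" where
  "homog n d = {p \<in> polyring n. \<forall>m\<in>Poly_Mapping.keys p. mdeg m = d}"

definition hcomp :: "nat \<Rightarrow> 'k::field mpoly \<Rightarrow> 'k mpoly" where
  "hcomp d p = Poly_Mapping.mapp (\<lambda>m c. if mdeg m = d then c else 0) p"

definition cmul :: "'k::field \<Rightarrow> 'k mpoly \<Rightarrow> 'k mpoly" where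
  "cmul c p = Poly_Mapping.single 0 c * p"

definition var :: "nat \<Rightarrow> 'k::field mpoly" where
  "var j = Poly_Mapping.single (Poly_Mapping.single j 1) 1"

definition is_ideal :: "nat \<Rightarrow> 'k::field mpoly set \<Rightarrow> bool" where
  "is_ideal n I \<longleftrightarrow> I \<subseteq> polyring n \<and> 0 \<in> I \<and>
     (\<forall>p\<in>I. \<forall>q\<in>I. p + q \<in> I) \<and>
     (\<forall>p\<in>I. \<forall>q\<in>polyring n. q * p \<in> I)"

definition homogeneous_ideal :: "nat \<Rightarrow> 'k::field mpoly set \<Rightarrow> bool" where
  "homogeneous_ideal n I \<longleftrightarrow> is_ideal n I \<and> (\<forall>p\<in>I. \<forall>d. hcomp d p \<in> I)"

definition indep_mod :: "'k::field mpoly set \<Rightarrow> 'k mpoly set \<Rightarrow> bool" where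
  "indep_mod I S \<longleftrightarrow> finite S \<and>
     (\<forall>c. (\<Sum>s\<in>S. cmul (c s) s) \<in> I \<longrightarrow> (\<forall>s\<in>S. c s = 0))"

definition qdim :: "'k::field mpoly set \<Rightarrow> 'k mpoly set \<Rightarrow> nat" where
  "qdim I V = Sup {card S | S. S \<subseteq> V \<and> indep_mod I S}"

definition socle :: "nat \<Rightarrow> 'k::field mpoly set \<Rightarrow> 'k mpoly set" where
  "socle n I = {f \<in> polyring n. \<forall>j<n. var j * f \<in> I}"

text \<open>Q/I is a standard graded Artinian Gorenstein K-algebra: I a homogeneous
  ideal with no linear forms, Q/I finite dimensional (Q_d \<subseteq> I for d large),
  and one-dimensional socle.\<close>
definition graded_AG :: "nat \<Rightarrow> 'k::field mpoly set \<Rightarrow> bool" where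
  "graded_AG n I \<longleftrightarrow> homogeneous_ideal n I \<and>
     I \<inter> homog n 1 = {0} \<and>
     (\<exists>N. \<forall>d\<ge>N. homog n d \<subseteq> I) \<and>
     qdim I (socle n I) = 1"

definition hilb :: "nat \<Rightarrow> 'k::field mpoly set \<Rightarrow> nat \<Rightarrow> nat" where
  "hilb n I d = qdim I (homog n d)"

definition AG_hilbert_function :: "'k::field itself \<Rightarrow> (nat \<Rightarrow> nat) \<Rightarrow> bool" where
  "AG_hilbert_function _ h \<longleftrightarrow>
     (\<exists>n (I :: 'k mpoly set). graded_AG n I \<and> (\<forall>d. hilb n I d = h d))"

definition seq_5 :: "nat \<Rightarrow> nat \<Rightarrow> nat \<Rightarrow> nat" where
  "seq_5 r h d = (if d = 0 then 1 else if d = 1 then r else if d = 2 then h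
                  else if d = 3 then h else if d = 4 then r else if d = 5 then 1 else 0)"

definition mu :: "'k::field itself \<Rightarrow> nat \<Rightarrow> nat" where
  "mu K r = (LEAST h. AG_hilbert_function K (seq_5 r h))"

definition delta :: "'k::field itself \<Rightarrow> nat \<Rightarrow> int" where
  "delta K r = int r - int (mu K r)"

end

theory Submission
  imports Defs "HOL-Library.Multiset"
begin

type_synonym mono = "nat \<Rightarrow>\<^sub>0 nat"
lemma lookup_single_mult:
  "Poly_Mapping.lookup (Poly_Mapping.single (c::mono) (x::'k::field) * g) w =
     (if (\<exists>r. w = c + r) then x * Poly_Mapping.lookup g (w - c) else 0)"
proof (cases "\<exists>r. w = c + r")
  case True
  then obtain r where r: "w = c + r" by blast
  have "(\<Sum>q. Poly_Mapping.lookup g q when w = c + q) = (\<Sum>q. Poly_Mapping.lookup g q when q = r)"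
    unfolding r by (simp add: eq_commute[of r])
  then show ?thesis using r by (simp add: lookup_mult lookup_single when_mult)
qed (simp add: lookup_mult lookup_single when_mult)

lemma lookup_cmul [simp]: "Poly_Mapping.lookup (cmul c p) a = c * Poly_Mapping.lookup p a"
  unfolding cmul_def by (subst lookup_single_mult) auto

lemma mdeg_add: "mdeg (a + b) = mdeg a + mdeg b"
proof -
  have 1: "mdeg a = (\<Sum>i\<in>Poly_Mapping.keys a \<union> Poly_Mapping.keys b. Poly_Mapping.lookup a i)"
    unfolding mdeg_def by (rule sum.mono_neutral_left) (simp_all add: in_keys_iff)
  have 2: "mdeg b = (\<Sum>i\<in>Poly_Mapping.keys a \<union> Poly_Mapping.keys b. Poly_Mapping.lookup b i)"
    unfolding mdeg_def by (rule sum.mono_neutral_left) (simp_all add: in_keys_iff)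
  have 3: "mdeg (a+b) = (\<Sum>i\<in>Poly_Mapping.keys a \<union> Poly_Mapping.keys b. Poly_Mapping.lookup (a+b) i)"
    unfolding mdeg_def by (rule sum.mono_neutral_left) (auto simp: in_keys_iff lookup_add)
  show ?thesis unfolding 1 2 3 by (simp add: lookup_add sum.distrib)
qed

lemma mdeg_0 [simp]: "mdeg 0 = 0" by (simp add: mdeg_def)

lemma mdeg_single [simp]: "mdeg (Poly_Mapping.single i k) = k"
  by (simp add: mdeg_def)

lemma mdeg_eq_0_iff: "mdeg a = 0 \<longleftrightarrow> a = 0"
proof
  assume "mdeg a = 0"
  then have "\<forall>i\<in>Poly_Mapping.keys a. Poly_Mapping.lookup a i = 0"
    unfolding mdeg_def by simp
  then show "a = 0"
    by (intro poly_mapping_eqI) (metis lookup_zero not_in_keys_iff_lookup_eq_zero)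
qed simp

lemma keys_add_nat: "Poly_Mapping.keys (a + b :: mono) = Poly_Mapping.keys a \<union> Poly_Mapping.keys b"
  unfolding set_eq_iff Un_iff in_keys_iff lookup_add by simp

lemma polyring_add: "p \<in> polyring n \<Longrightarrow> q \<in> polyring n \<Longrightarrow> p + q \<in> polyring n"
  unfolding polyring_def
proof (intro CollectI ballI)
  fix mm assume p: "p \<in> {p. \<forall>m\<in>Poly_Mapping.keys p. Poly_Mapping.keys m \<subseteq> {..<n}}"
    and q: "q \<in> {p. \<forall>m\<in>Poly_Mapping.keys p. Poly_Mapping.keys m \<subseteq> {..<n}}"
    and mm: "mm \<in> Poly_Mapping.keys (p + q)"
  from mm keys_add[of p q] have "mm \<in> Poly_Mapping.keys p \<or> mm \<in> Poly_Mapping.keys q" by blast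
  then show "Poly_Mapping.keys mm \<subseteq> {..<n}" using p q by blast
qed

lemma polyring_mult: "p \<in> polyring n \<Longrightarrow> q \<in> polyring n \<Longrightarrow> p * q \<in> polyring n"
  unfolding polyring_def
proof (intro CollectI ballI)
  fix mm assume p: "p \<in> {p. \<forall>m\<in>Poly_Mapping.keys p. Poly_Mapping.keys m \<subseteq> {..<n}}"
    and q: "q \<in> {p. \<forall>m\<in>Poly_Mapping.keys p. Poly_Mapping.keys m \<subseteq> {..<n}}"
    and mm: "mm \<in> Poly_Mapping.keys (p * q)"
  from mm keys_mult[of p q] obtain a b where ab: "mm = a + b" "a \<in> Poly_Mapping.keys p" "b \<in> Poly_Mapping.keys q"
    by blast
  then show "Poly_Mapping.keys mm \<subseteq> {..<n}" using p q unfolding ab(1) keys_add_nat by blast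
qed

lemma polyring_zero [simp]: "0 \<in> polyring n"
  unfolding polyring_def by simp

lemma polyring_single: "Poly_Mapping.keys a \<subseteq> {..<n} \<Longrightarrow> Poly_Mapping.single a c \<in> polyring n"
  unfolding polyring_def by simp

lemma polyring_cmul: "p \<in> polyring n \<Longrightarrow> cmul c p \<in> polyring n"
  unfolding cmul_def by (rule polyring_mult) (auto intro: polyring_single)

lemma polyring_sum: "(\<And>s. s \<in> S \<Longrightarrow> f s \<in> polyring n) \<Longrightarrow> sum f S \<in> polyring n"
  by (induction S rule: infinite_finite_induct) (auto intro: polyring_add)

lemma poly_expand: "(p::'k::field mpoly) = (\<Sum>l\<in>Poly_Mapping.keys p. Poly_Mapping.single l (Poly_Mapping.lookup p l))"
proof (rule poly_mapping_eqI)
  fix k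
  show "Poly_Mapping.lookup p k = Poly_Mapping.lookup (\<Sum>l\<in>Poly_Mapping.keys p. Poly_Mapping.single l (Poly_Mapping.lookup p l)) k"
    by (simp add: lookup_sum lookup_single when_def not_in_keys_iff_lookup_eq_zero)
qed

definition DD :: "mono set \<Rightarrow> mono \<Rightarrow> mono set" where
  "DD U b = {a. b + a \<in> U}"

definition psi :: "mono set \<Rightarrow> mono \<Rightarrow> 'k::field mpoly \<Rightarrow> 'k" where
  "psi U b g = (\<Sum>a\<in>DD U b. Poly_Mapping.lookup g a)"

definition annI :: "nat \<Rightarrow> mono set \<Rightarrow> 'k::field mpoly set" where
  "annI n U = {g \<in> polyring n. \<forall>b. psi U b g = 0}"

lemma finite_DD: "finite U \<Longrightarrow> finite (DD U b)"
proof -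
  assume "finite U"
  have "DD U b \<subseteq> (\<lambda>u. u - b) ` U"
  proof
    fix a assume "a \<in> DD U b"
    then have "b + a \<in> U" unfolding DD_def by simp
    moreover have "a = (b + a) - b" by simp
    ultimately show "a \<in> (\<lambda>u. u - b) ` U" by (rule rev_image_eqI)
  qed
  then show ?thesis using \<open>finite U\<close> by (meson finite_surj)
qed

lemma psi_add: "finite U \<Longrightarrow> psi U b (f + g) = psi U b f + psi U b g"
  unfolding psi_def by (simp add: lookup_add sum.distrib)

lemma psi_zero [simp]: "psi U b 0 = 0"
  unfolding psi_def by simp

lemma psi_cmul: "psi U b (cmul c g) = c * psi U b g"
  unfolding psi_def by (simp add: sum_distrib_left)

lemma psi_sum: "finite U \<Longrightarrow> psi U b (sum f S) = (\<Sum>s\<in>S. psi U b (f s))"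
  by (induction S rule: infinite_finite_induct) (auto simp: psi_add)

lemma psi_single: "finite U \<Longrightarrow> psi U b (Poly_Mapping.single a (1::'k::field)) = (if a \<in> DD U b then 1 else 0)"
  unfolding psi_def by (simp add: lookup_single when_def finite_DD)

lemma psi_single_mult: "finite U \<Longrightarrow>
   psi U b (Poly_Mapping.single c (x::'k::field) * g) = x * psi U (b + c) g"
proof -
  assume fU: "finite U"
  let ?F = "\<lambda>a. if (\<exists>r. a = c + r) then x * Poly_Mapping.lookup g (a - c) else 0"
  have "psi U b (Poly_Mapping.single c x * g) = (\<Sum>a\<in>DD U b. ?F a)"
    unfolding psi_def by (simp add: lookup_single_mult)
  also have "\<dots> = (\<Sum>a\<in>(\<lambda>r. c + r) ` DD U (b + c). ?F a)"
  proof (rule sum.mono_neutral_right)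
    show "finite (DD U b)" using fU by (rule finite_DD)
    show "(\<lambda>r. c + r) ` DD U (b + c) \<subseteq> DD U b" by (auto simp: DD_def add.assoc)
    show "\<forall>a\<in>DD U b - (\<lambda>r. c + r) ` DD U (b + c). ?F a = 0"
    proof
      fix a assume a: "a \<in> DD U b - (\<lambda>r. c + r) ` DD U (b + c)"
      show "?F a = 0"
      proof (cases "\<exists>r. a = c + r")
        case True
        then obtain r where r: "a = c + r" by blast
        with a have "b + (c + r) \<in> U" "r \<notin> DD U (b + c)" unfolding DD_def by auto
        then show ?thesis by (simp add: DD_def ac_simps)
      qed simp
    qed
  qed
  also have "\<dots> = (\<Sum>r\<in>DD U (b + c). ?F (c + r))"
    by (simp add: sum.reindex inj_on_def)
  also have "\<dots> = x * psi U (b + c) g"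
    unfolding psi_def by (simp add: sum_distrib_left)
  finally show ?thesis .
qed

lemma psi_mult: "finite U \<Longrightarrow>
   psi U b (q * g) = (\<Sum>l\<in>Poly_Mapping.keys q. Poly_Mapping.lookup q l * psi U (b + l) (g::'k::field mpoly))"
proof -
  assume fU: "finite U"
  have "q * g = (\<Sum>l\<in>Poly_Mapping.keys q. Poly_Mapping.single l (Poly_Mapping.lookup q l) * g)"
    by (subst poly_expand[of q]) (simp add: sum_distrib_right)
  then show ?thesis by (simp add: psi_sum fU psi_single_mult)
qed

lemma annI_ideal: "finite U \<Longrightarrow> is_ideal n (annI n U :: 'k::field mpoly set)"
  unfolding is_ideal_def
proof (intro conjI ballI)
  assume fU: "finite U"
  show "annI n U \<subseteq> polyring n" unfolding annI_def by blast
  show "0 \<in> annI n U" unfolding annI_def by simp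
  fix p :: "'k mpoly" assume p: "p \<in> annI n U"
  { fix q :: "'k mpoly" assume q: "q \<in> annI n U"
    show "p + q \<in> annI n U" using p q fU unfolding annI_def
      by (simp add: psi_add polyring_add) }
  { fix q :: "'k mpoly" assume q: "q \<in> polyring n"
    show "q * p \<in> annI n U" using p q fU unfolding annI_def
      by (simp add: psi_mult polyring_mult) }
qed


lemma exists_dep:
  fixes w :: "'s \<Rightarrow> 'b \<Rightarrow> 'k::field"
  assumes "finite B"
  shows "finite S \<Longrightarrow> card B < card S \<Longrightarrow>
    \<exists>c. (\<forall>b\<in>B. (\<Sum>s\<in>S. c s * w s b) = 0) \<and> (\<exists>s\<in>S. c s \<noteq> 0)"
  using assms
proof (induction B arbitrary: S w rule: finite_induct)
  case empty
  then have "S \<noteq> {}" by auto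
  then show ?case by (intro exI[of _ "\<lambda>_. 1"]) auto
next
  case (insert b B)
  show ?case
  proof (cases "\<forall>s\<in>S. w s b = 0")
    case True
    have "card B < card S" using insert by simp
    from insert.IH[OF insert.prems(1) this, of w] obtain c where
      c: "\<forall>b\<in>B. (\<Sum>s\<in>S. c s * w s b) = 0" "\<exists>s\<in>S. c s \<noteq> 0" by blast
    show ?thesis using c True by (intro exI[of _ c]) auto
  next
    case False
    then obtain s0 where s0: "s0 \<in> S" "w s0 b \<noteq> 0" by blast
    define S' where "S' = S - {s0}"
    have fS': "finite S'" using insert.prems(1) by (simp add: S'_def)
    have cS': "card B < card S'" using insert s0 by (simp add: S'_def)
    define w' where "w' = (\<lambda>s b2. w s b2 - w s b / w s0 b * w s0 b2)"
    from insert.IH[OF fS' cS', of w'] obtain c' where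
      c': "\<forall>b2\<in>B. (\<Sum>s\<in>S'. c' s * w' s b2) = 0" "\<exists>s\<in>S'. c' s \<noteq> 0" by blast
    define T where "T = (\<Sum>s\<in>S'. c' s * w s b)"
    define c where "c = c'(s0 := - T / w s0 b)"
    have s0S': "s0 \<notin> S'" by (simp add: S'_def)
    have split: "(\<Sum>s\<in>S. c s * w s b2) = c s0 * w s0 b2 + (\<Sum>s\<in>S'. c' s * w s b2)" for b2
    proof -
      have "(\<Sum>s\<in>S. c s * w s b2) = c s0 * w s0 b2 + (\<Sum>s\<in>S'. c s * w s b2)"
        unfolding S'_def using s0 insert.prems(1) by (simp add: sum.remove)
      also have "(\<Sum>s\<in>S'. c s * w s b2) = (\<Sum>s\<in>S'. c' s * w s b2)"
        using s0S' by (intro sum.cong) (auto simp: c_def)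
      finally show ?thesis .
    qed
    have "\<forall>b2\<in>insert b B. (\<Sum>s\<in>S. c s * w s b2) = 0"
    proof
      fix b2 assume b2: "b2 \<in> insert b B"
      show "(\<Sum>s\<in>S. c s * w s b2) = 0"
      proof (cases "b2 = b")
        case True
        have "(\<Sum>s\<in>S. c s * w s b2) = c s0 * w s0 b + T" using split[of b2] True by (simp add: T_def)
        also have "c s0 = - T / w s0 b" by (simp add: c_def)
        finally show ?thesis using s0 by simp
      next
        case False
        then have b2B: "b2 \<in> B" using b2 by simp
        have "(\<Sum>s\<in>S'. c' s * w s b2) = (\<Sum>s\<in>S'. c' s * w' s b2) + w s0 b2 / w s0 b * T"
          unfolding T_def w'_def by (simp add: sum_distrib_left algebra_simps sum.distrib[symmetric] sum_subtractf[symmetric])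
        also have "\<dots> = w s0 b2 / w s0 b * T" using c'(1) b2B by simp
        finally have e: "(\<Sum>s\<in>S'. c' s * w s b2) = w s0 b2 / w s0 b * T" .
        have "(\<Sum>s\<in>S. c s * w s b2) = c s0 * w s0 b2 + w s0 b2 / w s0 b * T"
          using split[of b2] e by simp
        also have "c s0 = - T / w s0 b" by (simp add: c_def)
        finally show ?thesis by (simp add: field_simps)
      qed
    qed
    moreover have "\<exists>s\<in>S. c s \<noteq> 0"
      using c'(2) s0S' by (auto simp: c_def S'_def)
    ultimately show ?thesis by blast
  qed
qed

lemma card_le_by_functionals:
  fixes w :: "'s \<Rightarrow> 'b \<Rightarrow> 'k::field"
  assumes "finite B" "finite S"
    and "\<forall>c. (\<forall>b\<in>B. (\<Sum>s\<in>S. c s * w s b) = 0) \<longrightarrow> (\<forall>s\<in>S. c s = 0)"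
  shows "card S \<le> card B"
proof (rule ccontr)
  assume "\<not> card S \<le> card B"
  then have "card B < card S" by simp
  from exists_dep[OF assms(1) assms(2) this, of w] assms(3) show False by blast
qed

lemma qdim_eq:
  fixes V :: "'k::field mpoly set" and t :: "mono \<Rightarrow> 'k mpoly"
  assumes fU: "finite U" and V: "V \<subseteq> polyring n" and fB: "finite B"
   and up: "\<forall>b. (\<forall>g\<in>V. psi U b g = 0) \<or> (\<exists>b'\<in>B. \<forall>g\<in>V. psi U b g = psi U b' g)"
   and tV: "t ` B \<subseteq> V"
   and tt: "\<forall>b\<in>B. \<forall>b'\<in>B. psi U b (t b') = (if b = b' then 1 else 0)"
  shows "qdim (annI n U) V = card B"
proof -
  let ?X = "{card S |S. S \<subseteq> V \<and> indep_mod (annI n U) S}"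
  have upper: "card S \<le> card B" if S: "S \<subseteq> V" "indep_mod (annI n U) S" for S
  proof -
    have fS: "finite S" using S(2) unfolding indep_mod_def by simp
    show ?thesis
    proof (rule card_le_by_functionals[OF fB fS, of "\<lambda>s b. psi U b s"], intro allI impI)
      fix c assume c: "\<forall>b\<in>B. (\<Sum>s\<in>S. c s * psi U b s) = 0"
      have "(\<Sum>s\<in>S. cmul (c s) s) \<in> annI n U"
        unfolding annI_def
      proof (intro CollectI conjI allI)
        show "(\<Sum>s\<in>S. cmul (c s) s) \<in> polyring n"
          using S(1) V by (intro polyring_sum polyring_cmul) auto
        fix b
        have e: "psi U b (\<Sum>s\<in>S. cmul (c s) s) = (\<Sum>s\<in>S. c s * psi U b s)"
          by (simp add: psi_sum[OF fU] psi_cmul)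
        from up[rule_format, of b] show "psi U b (\<Sum>s\<in>S. cmul (c s) s) = 0"
        proof
          assume "\<forall>g\<in>V. psi U b g = 0"
          then show ?thesis unfolding e using S(1) by (simp add: subset_iff)
        next
          assume "\<exists>b'\<in>B. \<forall>g\<in>V. psi U b g = psi U b' g"
          then obtain b' where b': "b' \<in> B" "\<forall>g\<in>V. psi U b g = psi U b' g" by blast
          have "(\<Sum>s\<in>S. c s * psi U b s) = (\<Sum>s\<in>S. c s * psi U b' s)"
            using S(1) b'(2) by (intro sum.cong) auto
          then show ?thesis unfolding e using c b'(1) by simp
        qed
      qed
      then show "\<forall>s\<in>S. c s = 0" using S(2) unfolding indep_mod_def by blast
    qed
  qed
  have inj: "inj_on t B"
  proof (rule inj_onI)
    fix b1 b2 assume "b1 \<in> B" "b2 \<in> B" "t b1 = t b2"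
    have "psi U b1 (t b1) = 1" using tt \<open>b1 \<in> B\<close> by simp
    then have "psi U b1 (t b2) = 1" using \<open>t b1 = t b2\<close> by simp
    then show "b1 = b2" using tt \<open>b1 \<in> B\<close> \<open>b2 \<in> B\<close> by (auto split: if_splits)
  qed
  have lower: "indep_mod (annI n U) (t ` B)"
    unfolding indep_mod_def
  proof (intro conjI allI impI ballI)
    show "finite (t ` B)" using fB by simp
    fix c s assume c: "(\<Sum>s\<in>t ` B. cmul (c s) s) \<in> annI n U" and s: "s \<in> t ` B"
    then obtain b0 where b0: "b0 \<in> B" "s = t b0" by blast
    have "0 = psi U b0 (\<Sum>s\<in>t ` B. cmul (c s) s)" using c unfolding annI_def by simp
    also have "\<dots> = (\<Sum>s\<in>t ` B. c s * psi U b0 s)" by (simp add: psi_sum[OF fU] psi_cmul)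
    also have "\<dots> = (\<Sum>b\<in>B. c (t b) * psi U b0 (t b))" by (simp add: sum.reindex[OF inj])
    also have "\<dots> = (\<Sum>b\<in>B. if b = b0 then c (t b) else 0)"
      using tt b0(1) by (intro sum.cong) auto
    also have "\<dots> = c s" using b0 fB by simp
    finally show "c s = 0" by simp
  qed
  have mem: "card B \<in> ?X"
    using lower tV card_image[OF inj] by (metis (mono_tags, lifting) mem_Collect_eq)
  have "Sup ?X = card B"
    by (rule cSup_eq_maximum[OF mem]) (auto intro: upper)
  then show ?thesis unfolding qdim_def .
qed


definition Uok :: "nat \<Rightarrow> mono set \<Rightarrow> bool" where
  "Uok n U \<longleftrightarrow> finite U \<and> (\<forall>u\<in>U. mdeg u = 5 \<and> Poly_Mapping.keys u \<subseteq> {..<n})"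

lemma lookup_nat_minus: "Poly_Mapping.lookup (a - b :: mono) k = Poly_Mapping.lookup a k - Poly_Mapping.lookup b k"
  by (simp add: minus_poly_mapping.rep_eq)

lemma DD_props:
  assumes "Uok n U" "a \<in> DD U b"
  shows "mdeg a + mdeg b = 5" "Poly_Mapping.keys a \<subseteq> {..<n}" "Poly_Mapping.keys b \<subseteq> {..<n}"
proof -
  have "b + a \<in> U" using assms(2) by (simp add: DD_def)
  then have "mdeg (b + a) = 5" "Poly_Mapping.keys (b + a) \<subseteq> {..<n}" using assms(1) by (auto simp: Uok_def)
  then show "mdeg a + mdeg b = 5" "Poly_Mapping.keys a \<subseteq> {..<n}" "Poly_Mapping.keys b \<subseteq> {..<n}"
    by (auto simp: mdeg_add keys_add_nat)
qed

lemma mdeg1: assumes "mdeg a = 1" shows "\<exists>i. a = Poly_Mapping.single i 1"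
proof -
  have "a \<noteq> 0" using assms by auto
  then obtain i where i: "i \<in> Poly_Mapping.keys a" by (metis keys_eq_empty ex_in_conv)
  have fk: "finite (Poly_Mapping.keys a)" by simp
  have "Poly_Mapping.lookup a i + (\<Sum>j\<in>Poly_Mapping.keys a - {i}. Poly_Mapping.lookup a j) = 1"
    using assms i fk unfolding mdeg_def by (simp add: sum.remove)
  moreover have "Poly_Mapping.lookup a i \<noteq> 0" using i by (simp add: in_keys_iff)
  ultimately have 1: "Poly_Mapping.lookup a i = 1" and 2: "(\<Sum>j\<in>Poly_Mapping.keys a - {i}. Poly_Mapping.lookup a j) = 0"
    by linarith+
  have "\<forall>j\<in>Poly_Mapping.keys a - {i}. Poly_Mapping.lookup a j = 0" using 2 fk by simp
  then have "\<forall>j. j \<noteq> i \<longrightarrow> Poly_Mapping.lookup a j = 0"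
    by (metis DiffI in_keys_iff singletonD)
  then have "a = Poly_Mapping.single i 1"
    by (intro poly_mapping_eqI) (auto simp: lookup_single when_def 1)
  then show ?thesis by blast
qed

lemma lookup_hcomp: "Poly_Mapping.lookup (hcomp d g) a = (if mdeg a = d then Poly_Mapping.lookup g a else 0)"
  unfolding hcomp_def by (simp add: lookup_mapp when_def not_in_keys_iff_lookup_eq_zero)

lemma hcomp_polyring: "g \<in> polyring n \<Longrightarrow> hcomp d g \<in> polyring n"
proof -
  assume g: "g \<in> polyring n"
  have "Poly_Mapping.keys (hcomp d g) \<subseteq> Poly_Mapping.keys g" unfolding hcomp_def by (rule keys_mapp_subset)
  show ?thesis unfolding polyring_def
  proof (intro CollectI ballI)
    fix m assume "m \<in> Poly_Mapping.keys (hcomp d g)"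
    with \<open>Poly_Mapping.keys (hcomp d g) \<subseteq> Poly_Mapping.keys g\<close> have "m \<in> Poly_Mapping.keys g" by (rule subsetD)
    with g show "Poly_Mapping.keys m \<subseteq> {..<n}" unfolding polyring_def by simp
  qed
qed

lemma psi_hcomp:
  assumes "Uok n U"
  shows "psi U b (hcomp d g) = (if mdeg b + d = 5 then psi U b g else 0)"
proof -
  have "psi U b (hcomp d g) = (\<Sum>a\<in>DD U b. if mdeg b + d = 5 then Poly_Mapping.lookup g a else 0)"
    unfolding psi_def lookup_hcomp
    by (intro sum.cong refl) (use DD_props(1)[OF assms] in fastforce)
  then show ?thesis by (simp add: psi_def)
qed

lemma annI_homogeneous: "Uok n U \<Longrightarrow> homogeneous_ideal n (annI n U :: 'k::field mpoly set)"
  unfolding homogeneous_ideal_def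
proof (intro conjI ballI allI)
  assume U: "Uok n U"
  then show "is_ideal n (annI n U :: 'k mpoly set)" by (simp add: annI_ideal Uok_def)
  fix p :: "'k mpoly" and d assume "p \<in> annI n U"
  then show "hcomp d p \<in> annI n U"
    unfolding annI_def using U by (simp add: psi_hcomp hcomp_polyring)
qed

lemma psi_homog_zero:
  assumes "Uok n U" "g \<in> homog n d" "mdeg b + d \<noteq> 5"
  shows "psi U b g = 0"
proof -
  have "Poly_Mapping.lookup g a = 0" if "a \<in> DD U b" for a
  proof -
    have "mdeg a \<noteq> d" using DD_props(1)[OF assms(1) that] assms(3) by simp
    then have "a \<notin> Poly_Mapping.keys g" using assms(2) unfolding homog_def by auto
    then show ?thesis by (simp add: not_in_keys_iff_lookup_eq_zero)
  qed
  then show ?thesis unfolding psi_def by simp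
qed

lemma homog_high: "Uok n U \<Longrightarrow> 6 \<le> d \<Longrightarrow> homog n d \<subseteq> annI n U"
proof
  fix g assume U: "Uok n U" and d: "6 \<le> d" and g: "g \<in> homog n d"
  have "psi U b g = 0" for b using psi_homog_zero[OF U g] d by simp
  then show "g \<in> annI n U" using g unfolding annI_def homog_def by simp
qed

lemma psi_socle:
  assumes U: "Uok n U" and g: "g \<in> socle n (annI n U)" and b: "b \<noteq> 0"
  shows "psi U b g = 0"
proof -
  obtain j where j: "j \<in> Poly_Mapping.keys b" using b by (metis keys_eq_empty ex_in_conv)
  show ?thesis
  proof (cases "j < n")
    case False
    have "DD U b = {}"
    proof (rule ccontr)
      assume "DD U b \<noteq> {}"
      then obtain a where "a \<in> DD U b" by blast
      from DD_props(3)[OF U this] j False show False by auto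
    qed
    then show ?thesis by (simp add: psi_def)
  next
    case True
    define b' where "b' = b - Poly_Mapping.single j 1"
    have lj: "Poly_Mapping.lookup b j \<noteq> 0" using j by (simp add: in_keys_iff)
    have bb: "b = b' + Poly_Mapping.single j 1"
      by (rule poly_mapping_eqI) (use lj in \<open>auto simp: b'_def lookup_add lookup_nat_minus lookup_single when_def\<close>)
    have "psi U b g = psi U b' (Poly_Mapping.single (Poly_Mapping.single j 1) 1 * g)"
      using U by (simp add: psi_single_mult Uok_def bb)
    also have "\<dots> = 0" using g True unfolding socle_def annI_def var_def by auto
    finally show ?thesis .
  qed
qed

lemma socle_qdim:
  assumes U: "Uok n U" and u0: "u0 \<in> U"
  shows "qdim (annI n U) (socle n (annI n U :: 'k::field mpoly set)) = 1"
proof -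
  have fU: "finite U" using U by (simp add: Uok_def)
  have u0k: "Poly_Mapping.keys u0 \<subseteq> {..<n}" and u0d: "mdeg u0 = 5" using U u0 by (auto simp: Uok_def)
  let ?t = "\<lambda>_::mono. Poly_Mapping.single u0 (1::'k)"
  have "qdim (annI n U) (socle n (annI n U :: 'k::field mpoly set)) = card {0::mono}"
  proof (rule qdim_eq[OF fU _ _ _ _, where t = ?t])
    show "socle n (annI n U) \<subseteq> polyring n" unfolding socle_def by blast
    show "finite {0::mono}" by simp
    show "\<forall>b. (\<forall>g\<in>socle n (annI n U). psi U b g = 0) \<or>
        (\<exists>b'\<in>{0}. \<forall>g\<in>socle n (annI n U :: 'k mpoly set). psi U b g = psi U b' g)"
      using psi_socle[OF U] by blast
    have "Poly_Mapping.single u0 (1::'k) \<in> socle n (annI n U)"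
      unfolding socle_def
    proof (intro CollectI conjI allI impI)
      show "Poly_Mapping.single u0 (1::'k) \<in> polyring n" using u0k by (rule polyring_single)
      fix j assume j: "j < n"
      have e: "var j * Poly_Mapping.single u0 (1::'k) = Poly_Mapping.single (Poly_Mapping.single j 1 + u0) 1"
        by (simp add: var_def mult_single)
      have "Poly_Mapping.single j 1 + u0 \<notin> DD U b" for b
      proof
        assume "Poly_Mapping.single j 1 + u0 \<in> DD U b"
        from DD_props(1)[OF U this] u0d show False by (simp add: mdeg_add)
      qed
      then show "var j * Poly_Mapping.single u0 (1::'k) \<in> annI n U"
        unfolding e annI_def using j u0k fU
        by (auto simp: psi_single keys_add_nat intro!: polyring_single)
    qed
    then show "?t ` {0} \<subseteq> socle n (annI n U)" by simp
    have "0 + u0 \<in> U" using u0 by simp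
    then show "\<forall>b\<in>{0::mono}. \<forall>b'\<in>{0}. psi U b (?t b') = (if b = b' then 1 else 0)"
      using fU by (simp add: psi_single DD_def)
  qed
  then show ?thesis by simp
qed

lemma hilb_eq:
  assumes U: "Uok n U" and fB: "finite B"
    and Bdeg: "\<forall>b\<in>B. mdeg b + d = 5"
    and ne: "\<forall>b\<in>B. DD U b \<noteq> {}"
    and disj: "\<forall>b\<in>B. \<forall>b'\<in>B. b \<noteq> b' \<longrightarrow> DD U b \<inter> DD U b' = {}"
    and up: "\<forall>b. mdeg b + d = 5 \<longrightarrow> DD U b = {} \<or> (\<exists>b'\<in>B. DD U b = DD U b')"
  shows "hilb n (annI n U :: 'k::field mpoly set) d = card B"
proof -
  have fU: "finite U" using U by (simp add: Uok_def)
  define sel where "sel b = (SOME a. a \<in> DD U b)" for b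
  have sel: "sel b \<in> DD U b" if "b \<in> B" for b
    using ne that unfolding sel_def by (simp add: some_in_eq)
  let ?t = "\<lambda>b. Poly_Mapping.single (sel b) (1::'k)"
  show ?thesis unfolding hilb_def
  proof (rule qdim_eq[OF fU _ fB _ _, where t = ?t])
    show "homog n d \<subseteq> polyring n" unfolding homog_def by blast
    show "\<forall>b. (\<forall>g\<in>homog n d. psi U b g = 0) \<or> (\<exists>b'\<in>B. \<forall>g\<in>homog n d. psi U b g = psi U b' (g::'k mpoly))"
    proof
      fix b
      show "(\<forall>g\<in>homog n d. psi U b g = 0) \<or> (\<exists>b'\<in>B. \<forall>g\<in>homog n d. psi U b g = psi U b' (g::'k mpoly))"
      proof (cases "mdeg b + d = 5")
        case False
        then show ?thesis using psi_homog_zero[OF U] by blast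
      next
        case True
        from up[rule_format, OF True] show ?thesis
        proof
          assume "DD U b = {}" then show ?thesis by (simp add: psi_def)
        next
          assume "\<exists>b'\<in>B. DD U b = DD U b'"
          then show ?thesis by (auto simp: psi_def)
        qed
      qed
    qed
    show "?t ` B \<subseteq> homog n d"
    proof
      fix x assume "x \<in> ?t ` B"
      then obtain b where b: "b \<in> B" "x = ?t b" by blast
      have "mdeg b + d = 5" using Bdeg b(1) by blast
      then have "mdeg (sel b) = d" using DD_props(1)[OF U sel[OF b(1)]] by linarith
      moreover have "Poly_Mapping.keys (sel b) \<subseteq> {..<n}" using DD_props(2)[OF U sel[OF b(1)]] .
      ultimately show "x \<in> homog n d" unfolding homog_def b(2) by (simp add: polyring_single)
    qed
    show "\<forall>b\<in>B. \<forall>b'\<in>B. psi U b (?t b') = (if b = b' then 1 else 0)"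
    proof (intro ballI)
      fix b b' assume b: "b \<in> B" and b': "b' \<in> B"
      show "psi U b (?t b') = (if b = b' then 1 else 0)"
      proof (cases "b = b'")
        case True then show ?thesis using sel[OF b] fU by (simp add: psi_single)
      next
        case False
        then have "sel b' \<notin> DD U b" using disj b b' sel[OF b'] by blast
        then show ?thesis using False fU by (simp add: psi_single)
      qed
    qed
  qed
qed

lemma lin_forms:
  assumes U: "Uok n U" and cover: "\<forall>i<n. \<exists>b. DD U b = {Poly_Mapping.single i 1}"
  shows "annI n U \<inter> homog n 1 = {0 :: 'k::field mpoly}"
proof
  show "{0} \<subseteq> annI n U \<inter> homog n 1" unfolding annI_def homog_def by simp
  show "annI n U \<inter> homog n 1 \<subseteq> {0 :: 'k mpoly}"
  proof
    fix l :: "'k mpoly" assume l: "l \<in> annI n U \<inter> homog n 1"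
    have "Poly_Mapping.keys l = {}"
    proof (rule ccontr)
      assume "Poly_Mapping.keys l \<noteq> {}"
      then obtain a where a: "a \<in> Poly_Mapping.keys l" by blast
      then have "mdeg a = 1" "Poly_Mapping.keys a \<subseteq> {..<n}" using l unfolding homog_def polyring_def by auto
      then obtain i where i: "a = Poly_Mapping.single i 1" using mdeg1 by blast
      then have "i < n" using \<open>Poly_Mapping.keys a \<subseteq> {..<n}\<close> by simp
      then obtain b where b: "DD U b = {a}" using cover i by blast
      have "psi U b l = Poly_Mapping.lookup l a" unfolding psi_def b by simp
      moreover have "psi U b l = 0" using l unfolding annI_def by simp
      ultimately show False using a by (simp add: in_keys_iff)
    qed
    then show "l \<in> {0}" by simp
  qed
qed

lemma AG_of_U:
  assumes U: "Uok n U" and u0: "u0 \<in> U"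
    and cover: "\<forall>i<n. \<exists>b. DD U b = {Poly_Mapping.single i 1}"
  shows "graded_AG n (annI n U :: 'k::field mpoly set)"
  unfolding graded_AG_def
  using annI_homogeneous[OF U] lin_forms[OF U cover] homog_high[OF U] socle_qdim[OF U u0]
  by blast


definition Xmon :: "nat \<Rightarrow> nat \<Rightarrow> mono set" where
  "Xmon m t = {a. Poly_Mapping.keys a \<subseteq> {..<m} \<and> mdeg a = t}"

lemma fin_count: "finite {x. count M x \<noteq> 0}" for M :: "nat multiset"
proof -
  have "{x. count M x \<noteq> 0} = set_mset M" by (simp add: set_eq_iff count_eq_zero_iff)
  then show ?thesis by simp
qed
lemma lk_count: "Poly_Mapping.lookup (Abs_poly_mapping (count M)) = count M" for M :: "nat multiset"
    using fin_count by simp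
lemma keys_count: "Poly_Mapping.keys (Abs_poly_mapping (count M)) = set_mset M" for M :: "nat multiset"
    by (simp add: set_eq_iff in_keys_iff lk_count count_eq_zero_iff)
lemma deg_count: "mdeg (Abs_poly_mapping (count M)) = size M" for M :: "nat multiset"
    unfolding mdeg_def keys_count lk_count by (simp add: size_multiset_overloaded_eq)

lemma bij_Xmon: "bij_betw (\<lambda>M. Abs_poly_mapping (count M)) (multisets_of_size {..<m} t) (Xmon m t)"
proof (rule bij_betwI')
  fix M N :: "nat multiset"
  show "(Abs_poly_mapping (count M) = Abs_poly_mapping (count N)) = (M = N)"
    by (metis lk_count count_inject)
next
  fix M assume "M \<in> multisets_of_size {..<m} t"
  then show "Abs_poly_mapping (count M) \<in> Xmon m t"
    unfolding multisets_of_size_def Xmon_def by (simp add: keys_count deg_count)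
next
  fix a assume a: "a \<in> Xmon m t"
  have f: "finite {x. Poly_Mapping.lookup a x > 0}"
  proof -
    have "{x. Poly_Mapping.lookup a x > 0} = Poly_Mapping.keys a" by (simp add: set_eq_iff in_keys_iff)
    then show ?thesis by simp
  qed
  define M where "M = Abs_multiset (Poly_Mapping.lookup a)"
  have cM: "count M = Poly_Mapping.lookup a" unfolding M_def using f by (rule count_Abs_multiset)
  have e: "Abs_poly_mapping (count M) = a" by (simp add: cM)
  moreover have "M \<in> multisets_of_size {..<m} t"
    using a e keys_count[of M] deg_count[of M] unfolding multisets_of_size_def Xmon_def by simp
  ultimately show "\<exists>M\<in>multisets_of_size {..<m} t. a = Abs_poly_mapping (count M)" by (intro bexI[of _ M]) simp_all
qed

lemma card_Xmon: "card (Xmon m t) = (m + t - 1) choose t"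
  using bij_betw_same_card[OF bij_Xmon[of m t]] card_multisets_of_size[of "{..<m}" t] by simp

lemma finite_Xmon: "finite (Xmon m t)"
  using bij_betw_finite[OF bij_Xmon[of m t]] finite_multisets_of_size[of "{..<m}" t] by simp


locale constr =
  fixes m n :: nat and Mq :: "nat \<Rightarrow> mono"
  assumes m1: "1 \<le> m" and mn: "m < n" and bij: "bij_betw Mq {m..<n} (Xmon m 4)"
begin

definition U :: "mono set" where "U = (\<lambda>k. Poly_Mapping.single k 1 + Mq k) ` {m..<n}"

definition kinv :: "mono \<Rightarrow> nat" where "kinv Q = inv_into {m..<n} Mq Q"

lemma Mq_X: "k \<in> {m..<n} \<Longrightarrow> Mq k \<in> Xmon m 4"
  using bij by (auto simp: bij_betw_def)

lemma Mq_keys: "k \<in> {m..<n} \<Longrightarrow> Poly_Mapping.keys (Mq k) \<subseteq> {..<m}"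
  using Mq_X by (simp add: Xmon_def)

lemma Mq_deg: "k \<in> {m..<n} \<Longrightarrow> mdeg (Mq k) = 4"
  using Mq_X by (simp add: Xmon_def)

lemma Mq_inj: "k \<in> {m..<n} \<Longrightarrow> k' \<in> {m..<n} \<Longrightarrow> Mq k = Mq k' \<Longrightarrow> k = k'"
  using bij by (auto simp: bij_betw_def inj_on_def)

lemma kinv: "Q \<in> Xmon m 4 \<Longrightarrow> kinv Q \<in> {m..<n} \<and> Mq (kinv Q) = Q"
proof -
  assume Q: "Q \<in> Xmon m 4"
  have im: "Mq ` {m..<n} = Xmon m 4" using bij by (rule bij_betw_imp_surj_on)
  then have "Q \<in> Mq ` {m..<n}" using Q by simp
  then have "inv_into {m..<n} Mq Q \<in> {m..<n}" "Mq (inv_into {m..<n} Mq Q) = Q"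
    by (rule inv_into_into, rule f_inv_into_f)
  then show ?thesis unfolding kinv_def by blast
qed

lemma pure_lookup: "Poly_Mapping.keys A \<subseteq> {..<m} \<Longrightarrow> m \<le> j \<Longrightarrow> Poly_Mapping.lookup A j = 0"
  by (metis lessThan_iff not_in_keys_iff_lookup_eq_zero not_le subsetD)

lemma memU: "x \<in> U \<longleftrightarrow> (\<exists>k\<in>{m..<n}. x = Poly_Mapping.single k 1 + Mq k)"
  unfolding U_def by blast

lemma Uok_U: "Uok n U"
  unfolding Uok_def
proof (intro conjI ballI)
  show "finite U" unfolding U_def by simp
  fix u assume "u \<in> U"
  then obtain k where k: "k \<in> {m..<n}" "u = Poly_Mapping.single k 1 + Mq k" by (auto simp: memU)
  show "mdeg u = 5" using k Mq_deg by (simp add: mdeg_add)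
  have "Poly_Mapping.keys (Mq k) \<subseteq> {..<n}" using Mq_keys[OF k(1)] mn by auto
  then show "Poly_Mapping.keys u \<subseteq> {..<n}" using k by (simp add: keys_add_nat)
qed

lemma F1:
  assumes j: "m \<le> j" "Poly_Mapping.lookup b j \<noteq> 0" and a: "a \<in> DD U b"
  shows "b + a = Poly_Mapping.single j 1 + Mq j" "j < n" "Poly_Mapping.keys a \<subseteq> {..<m}"
proof -
  obtain k where k: "k \<in> {m..<n}" "b + a = Poly_Mapping.single k 1 + Mq k"
    using a by (auto simp: DD_def memU)
  have lk: "Poly_Mapping.lookup (b + a) i = (if k = i then 1 else 0)" if "m \<le> i" for i
    using k pure_lookup[OF Mq_keys[OF k(1)] that] by (simp add: lookup_add lookup_single when_def)
  have "Poly_Mapping.lookup b j + Poly_Mapping.lookup a j = (if k = j then 1 else 0)"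
    using lk[OF j(1)] by (simp add: lookup_add)
  with j(2) have kj: "k = j" and aj: "Poly_Mapping.lookup a j = 0" by (auto split: if_splits)
  show "b + a = Poly_Mapping.single j 1 + Mq j" using k kj by simp
  show "j < n" using k kj by simp
  show "Poly_Mapping.keys a \<subseteq> {..<m}"
  proof
    fix i assume i: "i \<in> Poly_Mapping.keys a"
    show "i \<in> {..<m}"
    proof (rule ccontr)
      assume "i \<notin> {..<m}"
      then have "m \<le> i" by simp
      have "Poly_Mapping.lookup a i \<noteq> 0" using i by (simp add: in_keys_iff)
      moreover have "Poly_Mapping.lookup b i + Poly_Mapping.lookup a i = (if k = i then 1 else 0)"
        using lk[OF \<open>m \<le> i\<close>] by (simp add: lookup_add)
      ultimately show False using kj aj by (auto split: if_splits)
    qed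
  qed
qed

lemma F2:
  assumes c: "Poly_Mapping.keys c \<subseteq> {..<m}" and a: "a \<in> DD U c"
  shows "\<exists>k\<in>{m..<n}. c + a = Poly_Mapping.single k 1 + Mq k \<and> Poly_Mapping.lookup a k = 1"
proof -
  obtain k where k: "k \<in> {m..<n}" "c + a = Poly_Mapping.single k 1 + Mq k"
    using a by (auto simp: DD_def memU)
  have "Poly_Mapping.lookup (c + a) k = 1"
    using k pure_lookup[OF Mq_keys[OF k(1)]] by (simp add: lookup_add)
  moreover have "Poly_Mapping.lookup c k = 0" using pure_lookup[OF c] k(1) by simp
  ultimately have "Poly_Mapping.lookup a k = 1" by (simp add: lookup_add)
  then show ?thesis using k by blast
qed

end


context constr begin

definition bq :: "nat \<Rightarrow> mono \<Rightarrow> mono" where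
  "bq d q = Poly_Mapping.single (kinv (q + Poly_Mapping.single 0 (4 - d))) 1 + Poly_Mapping.single 0 (4 - d)"

lemma keys_single0: "Poly_Mapping.keys (Poly_Mapping.single 0 k :: mono) \<subseteq> {..<m}"
  using m1 by auto

lemma DD_bq:
  assumes d: "1 \<le> d" "d \<le> 4" and q: "q \<in> Xmon m d"
  shows "DD U (bq d q) = {q}"
proof -
  define Q where "Q = q + Poly_Mapping.single 0 (4 - d)"
  have QX: "Q \<in> Xmon m 4"
    using q d keys_single0[of "4 - d"] unfolding Q_def Xmon_def by (simp add: keys_add_nat mdeg_add)
  define k where "k = kinv Q"
  have k: "k \<in> {m..<n}" "Mq k = Q" using kinv[OF QX] by (simp_all add: k_def)
  have b: "bq d q = Poly_Mapping.single k 1 + Poly_Mapping.single 0 (4 - d)"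
    unfolding bq_def k_def Q_def by simp
  have qin: "bq d q + q = Poly_Mapping.single k 1 + Mq k"
    unfolding b k(2) Q_def by (simp add: ac_simps)
  then have "q \<in> DD U (bq d q)" using k(1) by (auto simp: DD_def memU)
  moreover have "a = q" if a: "a \<in> DD U (bq d q)" for a
  proof -
    have "k \<noteq> 0" using k(1) m1 by auto
    then have "Poly_Mapping.lookup (bq d q) k \<noteq> 0"
      unfolding b by (simp add: lookup_add lookup_single when_def)
    from F1(1)[OF _ this a] k(1) have "bq d q + a = Poly_Mapping.single k 1 + Mq k" by simp
    with qin have "bq d q + a = bq d q + q" by simp
    then show "a = q" by (rule add_left_imp_eq)
  qed
  ultimately show ?thesis by blast
qed

lemma bq_y:
  assumes d: "1 \<le> d" "d \<le> 4" and q: "q \<in> Xmon m d"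
  shows "\<not> Poly_Mapping.keys (bq d q) \<subseteq> {..<m}"
proof -
  define Q where "Q = q + Poly_Mapping.single 0 (4 - d)"
  have QX: "Q \<in> Xmon m 4"
    using q d keys_single0[of "4 - d"] unfolding Q_def Xmon_def by (simp add: keys_add_nat mdeg_add)
  have k: "kinv Q \<in> {m..<n}" using kinv[OF QX] by simp
  have "kinv Q \<in> Poly_Mapping.keys (bq d q)" unfolding bq_def Q_def[symmetric] by (simp add: keys_add_nat)
  then show ?thesis using k by auto
qed

lemma bq_deg:
  assumes d: "1 \<le> d" "d \<le> 4"
  shows "mdeg (bq d q) + d = 5"
  using d unfolding bq_def by (simp add: mdeg_add)

lemma DD_pure_ne:
  assumes d: "1 \<le> d" "d \<le> 4" and c: "c \<in> Xmon m (5 - d)"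
  shows "DD U c \<noteq> {}"
proof -
  define Q where "Q = c + Poly_Mapping.single 0 (d - 1)"
  have QX: "Q \<in> Xmon m 4"
    using c d keys_single0[of "d - 1"] unfolding Q_def Xmon_def by (simp add: keys_add_nat mdeg_add)
  define k where "k = kinv Q"
  have k: "k \<in> {m..<n}" "Mq k = Q" using kinv[OF QX] by (simp_all add: k_def)
  have "c + (Poly_Mapping.single k 1 + Poly_Mapping.single 0 (d - 1)) = Poly_Mapping.single k 1 + Mq k"
    unfolding k(2) Q_def by (simp add: ac_simps)
  then have "Poly_Mapping.single k 1 + Poly_Mapping.single 0 (d - 1) \<in> DD U c"
    using k(1) by (auto simp: DD_def memU)
  then show ?thesis by blast
qed

definition BB :: "nat \<Rightarrow> mono set" where
  "BB d = Xmon m (5 - d) \<union> bq d ` Xmon m d"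

lemma hilb_mid:
  assumes d: "1 \<le> d" "d \<le> 4"
  shows "hilb n (annI n U :: 'k::field mpoly set) d = card (Xmon m (5 - d)) + card (Xmon m d)"
proof -
  have inj: "inj_on (bq d) (Xmon m d)"
  proof (rule inj_onI)
    fix q q' assume "q \<in> Xmon m d" "q' \<in> Xmon m d" "bq d q = bq d q'"
    then have "{q} = {q'}" using DD_bq[OF d] by metis
    then show "q = q'" by simp
  qed
  have disjX: "Xmon m (5 - d) \<inter> bq d ` Xmon m d = {}"
  proof -
    have "x \<notin> Xmon m (5 - d)" if "x \<in> bq d ` Xmon m d" for x
      using that bq_y[OF d] unfolding Xmon_def by auto
    then show ?thesis by blast
  qed
  have cardB: "card (BB d) = card (Xmon m (5 - d)) + card (Xmon m d)"
    unfolding BB_def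
    by (subst card_Un_disjoint) (simp_all add: finite_Xmon disjX card_image[OF inj])
  have "hilb n (annI n U :: 'k::field mpoly set) d = card (BB d)"
  proof (rule hilb_eq[OF Uok_U])
    show "finite (BB d)" unfolding BB_def by (simp add: finite_Xmon)
    show "\<forall>b\<in>BB d. mdeg b + d = 5"
      unfolding BB_def using bq_deg[OF d] d by (auto simp: Xmon_def)
    show "\<forall>b\<in>BB d. DD U b \<noteq> {}"
      unfolding BB_def using DD_pure_ne[OF d] DD_bq[OF d] by auto
    show "\<forall>b\<in>BB d. \<forall>b'\<in>BB d. b \<noteq> b' \<longrightarrow> DD U b \<inter> DD U b' = {}"
    proof (intro ballI impI)
      fix b b' assume b: "b \<in> BB d" and b': "b' \<in> BB d" and ne: "b \<noteq> b'"
      have pp: "DD U c \<inter> DD U c' = {}" if c: "c \<in> Xmon m (5 - d)" "c' \<in> Xmon m (5 - d)" "c \<noteq> c'" for c c'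
      proof (rule ccontr)
        assume "DD U c \<inter> DD U c' \<noteq> {}"
        then obtain a where a: "a \<in> DD U c" "a \<in> DD U c'" by blast
        have ck: "Poly_Mapping.keys c \<subseteq> {..<m}" "Poly_Mapping.keys c' \<subseteq> {..<m}" using c by (auto simp: Xmon_def)
        obtain k where k: "k \<in> {m..<n}" "c + a = Poly_Mapping.single k 1 + Mq k" "Poly_Mapping.lookup a k = 1"
          using F2[OF ck(1) a(1)] by blast
        obtain k' where k': "k' \<in> {m..<n}" "c' + a = Poly_Mapping.single k' 1 + Mq k'"
          using F2[OF ck(2) a(2)] by blast
        have "Poly_Mapping.lookup (c' + a) k = 1"
          using k(1,3) pure_lookup[OF ck(2)] by (simp add: lookup_add)
        moreover have "Poly_Mapping.lookup (Poly_Mapping.single k' 1 + Mq k') k = (if k' = k then 1 else 0)"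
          using pure_lookup[OF Mq_keys[OF k'(1)]] k(1) by (simp add: lookup_add lookup_single when_def)
        ultimately have "k' = k" using k'(2) by (auto split: if_splits)
        then have "c + a = c' + a" using k(2) k'(2) by simp
        then show False using c(3) by simp
      qed
      have pq: "DD U c \<inter> DD U (bq d q) = {}" if c: "c \<in> Xmon m (5 - d)" and q: "q \<in> Xmon m d" for c q
      proof -
        have "q \<notin> DD U c"
        proof
          assume "q \<in> DD U c"
          have ck: "Poly_Mapping.keys c \<subseteq> {..<m}" using c by (auto simp: Xmon_def)
          obtain k where k: "k \<in> {m..<n}" "Poly_Mapping.lookup q k = 1"
            using F2[OF ck \<open>q \<in> DD U c\<close>] by blast
          have "Poly_Mapping.keys q \<subseteq> {..<m}" using q by (auto simp: Xmon_def)
          from pure_lookup[OF this] k show False by simp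
        qed
        then show ?thesis by (simp add: DD_bq[OF d q])
      qed
      have qq: "DD U (bq d q) \<inter> DD U (bq d q') = {}" if "q \<in> Xmon m d" "q' \<in> Xmon m d" "bq d q \<noteq> bq d q'" for q q'
        using that DD_bq[OF d] by auto
      from b have bc: "b \<in> Xmon m (5 - d) \<or> (\<exists>q\<in>Xmon m d. b = bq d q)" unfolding BB_def by blast
      from b' have bc': "b' \<in> Xmon m (5 - d) \<or> (\<exists>q\<in>Xmon m d. b' = bq d q)" unfolding BB_def by blast
      show "DD U b \<inter> DD U b' = {}"
      proof (cases "b \<in> Xmon m (5 - d)")
        case T1: True
        show ?thesis
        proof (cases "b' \<in> Xmon m (5 - d)")
          case True show ?thesis using pp[OF T1 True ne] .
        next
          case False
          then obtain q' where "q' \<in> Xmon m d" "b' = bq d q'" using bc' by blast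
          then show ?thesis using pq[OF T1] by simp
        qed
      next
        case F1: False
        then obtain q where q: "q \<in> Xmon m d" "b = bq d q" using bc by blast
        show ?thesis
        proof (cases "b' \<in> Xmon m (5 - d)")
          case True then show ?thesis using pq[OF True q(1)] q(2) by (simp add: Int_commute)
        next
          case False
          then obtain q' where "q' \<in> Xmon m d" "b' = bq d q'" using bc' by blast
          then show ?thesis using qq[OF q(1)] q(2) ne by simp
        qed
      qed
    qed
    show "\<forall>b. mdeg b + d = 5 \<longrightarrow> DD U b = {} \<or> (\<exists>b'\<in>BB d. DD U b = DD U b')"
    proof (intro allI impI)
      fix b assume bd: "mdeg b + d = 5"
      show "DD U b = {} \<or> (\<exists>b'\<in>BB d. DD U b = DD U b')"
      proof (cases "DD U b = {}")
        case False
        then obtain a where a: "a \<in> DD U b" by blast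
        show ?thesis
        proof (cases "Poly_Mapping.keys b \<subseteq> {..<m}")
          case True
          then have "b \<in> BB d" using bd unfolding BB_def Xmon_def by auto
          then show ?thesis by blast
        next
          case False
          then obtain j where j: "j \<in> Poly_Mapping.keys b" "\<not> j < m" by auto
          have lj: "Poly_Mapping.lookup b j \<noteq> 0" using j(1) by (simp add: in_keys_iff)
          have mj: "m \<le> j" using j(2) by simp
          have e1: "b + a = Poly_Mapping.single j 1 + Mq j" and ak: "Poly_Mapping.keys a \<subseteq> {..<m}"
            using F1[OF mj lj a] by simp_all
          have "mdeg a = d" using DD_props(1)[OF Uok_U a] bd by simp
          then have aX: "a \<in> Xmon m d" using ak by (simp add: Xmon_def)
          have "DD U b = {a}"
          proof -
            have "a' = a" if "a' \<in> DD U b" for a'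
            proof -
              have "b + a' = b + a" using F1(1)[OF mj lj that] e1 by simp
              then show ?thesis by (rule add_left_imp_eq)
            qed
            then show ?thesis using a by blast
          qed
          then have "DD U b = DD U (bq d a)" using DD_bq[OF d aX] by simp
          moreover have "bq d a \<in> BB d" using aX unfolding BB_def by blast
          ultimately show ?thesis by blast
        qed
      qed simp
    qed
  qed
  then show ?thesis using cardB by simp
qed

end


context constr begin

definition u0 :: mono where "u0 = Poly_Mapping.single m 1 + Mq m"

lemma u0U: "u0 \<in> U" unfolding u0_def memU using mn by auto

lemma u0deg: "mdeg u0 = 5" using Uok_U u0U by (simp add: Uok_def)

lemma DD_deg5: "mdeg x = 5 \<Longrightarrow> DD U x \<subseteq> {0}"
proof
  fix a assume "mdeg x = 5" "a \<in> DD U x"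
  then have "mdeg a = 0" using DD_props(1)[OF Uok_U] by fastforce
  then show "a \<in> {0}" by (simp add: mdeg_eq_0_iff)
qed

lemma hilb_0: "hilb n (annI n U :: 'k::field mpoly set) 0 = 1"
proof -
  have z: "0 \<in> DD U u0" using u0U by (simp add: DD_def)
  have "hilb n (annI n U :: 'k::field mpoly set) 0 = card {u0}"
  proof (rule hilb_eq[OF Uok_U])
    show "\<forall>b. mdeg b + 0 = 5 \<longrightarrow> DD U b = {} \<or> (\<exists>b'\<in>{u0}. DD U b = DD U b')"
    proof (intro allI impI)
      fix b assume "mdeg b + 0 = 5"
      then have "DD U b \<subseteq> {0}" using DD_deg5 by simp
      then have o: "DD U b = {} \<or> DD U b = {0}" by (rule subset_singletonD)
      have "DD U u0 \<subseteq> {0}" using DD_deg5[OF u0deg] .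
      then have "DD U u0 = {0}" using z by (metis subset_singletonD empty_iff)
      then show "DD U b = {} \<or> (\<exists>b'\<in>{u0}. DD U b = DD U b')" using o by simp
    qed
    show "finite {u0}" by simp
    show "\<forall>b\<in>{u0}. mdeg b + 0 = 5" using u0deg by simp
    show "\<forall>b\<in>{u0}. DD U b \<noteq> {}" using z by (simp add: ex_in_conv[symmetric]; blast)
    show "\<forall>b\<in>{u0}. \<forall>b'\<in>{u0}. b \<noteq> b' \<longrightarrow> DD U b \<inter> DD U b' = {}" by simp
  qed
  then show ?thesis by simp
qed

lemma hilb_5: "hilb n (annI n U :: 'k::field mpoly set) 5 = 1"
proof -
  have "hilb n (annI n U :: 'k::field mpoly set) 5 = card {0::mono}"
  proof (rule hilb_eq[OF Uok_U])
    have "u0 \<in> DD U 0" using u0U by (simp add: DD_def)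
    then show "\<forall>b\<in>{0::mono}. DD U b \<noteq> {}" by blast
    show "\<forall>b. mdeg b + 5 = 5 \<longrightarrow> DD U b = {} \<or> (\<exists>b'\<in>{0}. DD U b = DD U b')"
      by (simp add: mdeg_eq_0_iff)
    show "finite {0::mono}" by simp
    show "\<forall>b\<in>{0::mono}. mdeg b + 5 = 5" by simp
    show "\<forall>b\<in>{0::mono}. \<forall>b'\<in>{0}. b \<noteq> b' \<longrightarrow> DD U b \<inter> DD U b' = {}" by simp
  qed
  then show ?thesis by simp
qed

lemma hilb_high: "6 \<le> d \<Longrightarrow> hilb n (annI n U :: 'k::field mpoly set) d = 0"
proof -
  assume d: "6 \<le> d"
  have "hilb n (annI n U :: 'k::field mpoly set) d = card ({} :: mono set)"
    by (rule hilb_eq[OF Uok_U]) (use d in simp_all)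
  then show ?thesis by simp
qed

lemma cover: "\<forall>i<n. \<exists>b. DD U b = {Poly_Mapping.single i 1}"
proof (intro allI impI)
  fix i assume i: "i < n"
  show "\<exists>b. DD U b = {Poly_Mapping.single i 1}"
  proof (cases "i < m")
    case True
    have "Poly_Mapping.single i 1 \<in> Xmon m 1" using True by (simp add: Xmon_def)
    then show ?thesis using DD_bq[of 1] by auto
  next
    case False
    then have iY: "i \<in> {m..<n}" using i by simp
    have "DD U (Mq i) = {Poly_Mapping.single i 1}"
    proof
      show "{Poly_Mapping.single i 1} \<subseteq> DD U (Mq i)"
        using iY by (auto simp: DD_def memU add.commute)
      show "DD U (Mq i) \<subseteq> {Poly_Mapping.single i 1}"
      proof
        fix a assume a: "a \<in> DD U (Mq i)"
        obtain k where k: "k \<in> {m..<n}" "Mq i + a = Poly_Mapping.single k 1 + Mq k" "Poly_Mapping.lookup a k = 1"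
          using F2[OF Mq_keys[OF iY] a] by blast
        have "mdeg a = 1" using DD_props(1)[OF Uok_U a] Mq_deg[OF iY] by simp
        then obtain l where l: "a = Poly_Mapping.single l 1" using mdeg1 by blast
        have "l = k" using k(3) l by (auto simp: lookup_single when_def split: if_splits)
        then have "Mq i + Poly_Mapping.single k 1 = Mq k + Poly_Mapping.single k 1"
          using k(2) l by (simp add: add.commute)
        then have "Mq i = Mq k" by (rule add_right_imp_eq)
        then have "i = k" using Mq_inj iY k(1) by blast
        then show "a \<in> {Poly_Mapping.single i 1}" using l \<open>l = k\<close> by simp
      qed
    qed
    then show ?thesis by blast
  qed
qed

lemma AG: "graded_AG n (annI n U :: 'k::field mpoly set)"
  by (rule AG_of_U[OF Uok_U u0U cover])

lemma card_Y: "n - m = card (Xmon m 4)"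
  using bij_betw_same_card[OF bij] by simp

lemma hilb_all:
  "hilb n (annI n U :: 'k::field mpoly set) d =
     seq_5 n (card (Xmon m 2) + card (Xmon m 3)) d"
proof -
  have X1: "card (Xmon m 1) = m" by (simp add: card_Xmon)
  have nn: "n = card (Xmon m 4) + card (Xmon m 1)" using card_Y mn X1 by simp
  consider "d = 0" | "d = 1" | "d = 2" | "d = 3" | "d = 4" | "d = 5" | "6 \<le> d" by linarith
  then show ?thesis
  proof cases
    case 1 then show ?thesis by (simp add: hilb_0 seq_5_def)
  next
    case 2 then show ?thesis using hilb_mid[of 1] nn by (simp add: seq_5_def)
  next
    case 3 then show ?thesis using hilb_mid[of 2] by (simp add: seq_5_def add.commute)
  next
    case 4 then show ?thesis using hilb_mid[of 3] by (simp add: seq_5_def)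
  next
    case 5 then show ?thesis using hilb_mid[of 4] nn by (simp add: seq_5_def add.commute)
  next
    case 6 then show ?thesis by (simp add: hilb_5 seq_5_def)
  next
    case 7 then show ?thesis by (simp add: hilb_high seq_5_def)
  qed
qed

lemma AG_hf: "AG_hilbert_function TYPE('k::field) (seq_5 n (card (Xmon m 2) + card (Xmon m 3)))"
  unfolding AG_hilbert_function_def
  using AG[where 'k='k] hilb_all[where 'k='k] by blast

end

lemma c2: "real (Suc x choose 2) = real (x+1) * real x / 2"
  by (induction x) (simp_all add: numeral_2_eq_2 field_simps)
lemma c3: "real (Suc (Suc x) choose 3) = real (x+2) * real (x+1) * real x / 6"
proof (induction x)
  case (Suc x)
  have "Suc (Suc (Suc x)) choose 3 = (Suc (Suc x) choose 2) + (Suc (Suc x) choose 3)"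
    by (simp add: numeral_3_eq_3 numeral_2_eq_2)
  then show ?case using Suc c2[of "Suc x"] by (simp add: field_simps)
qed (simp add: numeral_3_eq_3)
lemma c4: "real (Suc (Suc (Suc x)) choose 4) = real (x+3) * real (x+2) * real (x+1) * real x / 24"
proof (induction x)
  case (Suc x)
  have "Suc (Suc (Suc (Suc x))) choose 4 = (Suc (Suc (Suc x)) choose 3) + (Suc (Suc (Suc x)) choose 4)"
    by (simp add: numeral_3_eq_3 numeral_2_eq_2 eval_nat_numeral)
  then show ?case using Suc c3[of "Suc x"] by (simp add: field_simps)
qed (simp add: eval_nat_numeral)
lemma final_arith:
  fixes y :: nat
  assumes "m = y + 3"
  shows "real m + real ((m + 3) choose 4) - real ((m + 1) choose 2) - real ((m+2) choose 3)
     = (real m + 5) / 4 * real (m choose 3)"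
proof -
  have a: "(m + 3) choose 4 = Suc (Suc (Suc m)) choose 4" by (simp add: numeral_3_eq_3)
  have b: "(m + 1) choose 2 = Suc m choose 2" by simp
  have c: "(m + 2) choose 3 = Suc (Suc m) choose 3" by (simp add: numeral_2_eq_2)
  have d: "m choose 3 = Suc (Suc (y+1)) choose 3" using assms by (simp add: numeral_3_eq_3)
  show ?thesis unfolding a b c d c2 c3 c4 using assms by (simp add: field_simps)
qed

theorem proposition3p14:
  fixes m :: nat
  assumes "m \<ge> 3"
  shows "real_of_int (delta TYPE('k::field_char_0) (m + (m + 3 choose 4)))
           \<ge> (real m + 5) / 4 * real (m choose 3)"
proof -
  define n where "n = m + (m + 3 choose 4)"
  have c4pos: "0 < (m + 3 choose 4)" using assms by simp
  have X4: "card (Xmon m 4) = (m + 3 choose 4)" by (simp add: card_Xmon add.commute)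
  have "card {m..<n} = card (Xmon m 4)" using X4 by (simp add: n_def)
  then obtain Mq where bij: "bij_betw Mq {m..<n} (Xmon m 4)"
    using finite_same_card_bij[of "{m..<n}" "Xmon m 4"] finite_Xmon by blast
  interpret C: constr m n Mq
    by unfold_locales (use assms c4pos bij in \<open>auto simp: n_def\<close>)
  define h where "h = card (Xmon m 2) + card (Xmon m 3)"
  have hv: "h = (m + 1 choose 2) + (m + 2 choose 3)" unfolding h_def by (simp add: card_Xmon)
  have "mu TYPE('k) n \<le> h"
    unfolding mu_def h_def by (rule Least_le) (rule C.AG_hf)
  then have "delta TYPE('k) n \<ge> int n - int h" unfolding delta_def by simp
  then have "real_of_int (delta TYPE('k) n) \<ge> real n - real h" by linarith
  moreover have "real n - real h = (real m + 5) / 4 * real (m choose 3)"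
  proof -
    obtain y where y: "m = y + 3" using assms by (metis add.commute le_iff_add)
    show ?thesis using final_arith[OF y] unfolding hv n_def by simp
  qed
  ultimately show ?thesis unfolding n_def by simp
qed


end
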